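(* Let $\mathbf X=\{X_i\}_{i\in\mathbb Z}$ be a stationary strongly mixing process on a finite alphabet with $0<\mathcal H_1(\mathbf X)<\infty$, whose strong mixing coefficients satisfy $\sum_{s=0}^\infty d(s)<\infty$, and which is aperiodic in the sense that $\mathcal R(\mathbf X):=\sup_{s\in\mathbb N_+}\mathbb P[X_1=X_{1+s}]<1$. Let $\beta>0$, $\ell=\beta\log n$, and $\eta>0$. Then \[ \sup_{1\le s\le\ell}\ \max_{\frac{1+\eta}{\mathcal H_1(\mathbf X)}\log n\le t\le\beta\log n}\mathbb P\!\left[X_1^t=X_{1+s}^{t+s}\right]=o\!\left(\frac1{\log n}\right)\quad(n\to\infty), \] with constants depending on $p_{\min}:=\min_{x\in\mathrm{supp}(P_{X_1})}P_{X_1}(x)$.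
   Context: Logarithms are to base $|\mathcal X|$. Strong mixing coefficient: $d(s):=\sup\{|\mathbb P[\mathcal F\mid\mathcal E]-\mathbb P[\mathcal F]|: i\in\mathbb Z,\ \mathcal E\in\sigma(X_{-\infty}^i),\ \mathcal F\in\sigma(X_{i+s}^\infty)\}$, taken w.l.o.g. non-increasing in $s$; $\mathbf X$ is strongly mixing if $d(s)\to0$. $\mathcal H_1(\mathbf X)=\lim_{t\to\infty}\frac{1}{2t+1}H_1(P_{X_{-t}^t})$ is the Shannon entropy rate (assumed to exist). $X_1^t=X_{1+s}^{t+s}$ means $X_i=X_{i+s}$ for all $i\in[t]$. *)

theory Defs
  imports "HOL-Probability.Probability"
begin

text \<open>A process is a family X :: int => 'a => 'x of random variables on a probability
space M with values in a finite alphabet 'x. Logarithms are to base |'x| = CARD('x).\<close>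

definition stationary_process :: "'a measure \<Rightarrow> (int \<Rightarrow> 'a \<Rightarrow> 'x) \<Rightarrow> bool" where
  "stationary_process M X \<longleftrightarrow>
     (\<forall>k::int. distr M (PiM UNIV (\<lambda>_. count_space UNIV)) (\<lambda>\<omega> i. X (i + k) \<omega>)
             = distr M (PiM UNIV (\<lambda>_. count_space UNIV)) (\<lambda>\<omega> i. X i \<omega>))"

definition past_events :: "'a measure \<Rightarrow> (int \<Rightarrow> 'a \<Rightarrow> 'x) \<Rightarrow> int \<Rightarrow> 'a set set" where
  "past_events M X i = sigma_sets (space M) (\<Union>j\<in>{..i}. {X j -` A \<inter> space M | A. True})"

definition future_events :: "'a measure \<Rightarrow> (int \<Rightarrow> 'a \<Rightarrow> 'x) \<Rightarrow> int \<Rightarrow> 'a set set" where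
  "future_events M X i = sigma_sets (space M) (\<Union>j\<in>{i..}. {X j -` A \<inter> space M | A. True})"

definition mixing_coeff :: "'a measure \<Rightarrow> (int \<Rightarrow> 'a \<Rightarrow> 'x) \<Rightarrow> nat \<Rightarrow> real" where
  "mixing_coeff M X s = Sup {\<bar>measure M (F \<inter> E) / measure M E - measure M F\<bar> | i E F.
       E \<in> past_events M X i \<and> F \<in> future_events M X (i + int s) \<and> measure M E > 0}"

definition block_entropy :: "'a measure \<Rightarrow> (int \<Rightarrow> 'a \<Rightarrow> 'x::finite) \<Rightarrow> nat \<Rightarrow> real" where
  "block_entropy M X t = - (\<Sum>w\<in>PiE {- int t .. int t} (\<lambda>_. UNIV).
      let p = measure M {\<omega> \<in> space M. \<forall>j\<in>{- int t .. int t}. X j \<omega> = w j}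
      in p * log (real CARD('x)) p)"

definition recurrence_coeff :: "'a measure \<Rightarrow> (int \<Rightarrow> 'a \<Rightarrow> 'x) \<Rightarrow> real" where
  "recurrence_coeff M X = Sup {measure M {\<omega> \<in> space M. X 1 \<omega> = X (1 + int s) \<omega>} | s::nat. s \<ge> 1}"

definition shift_match_prob :: "'a measure \<Rightarrow> (int \<Rightarrow> 'a \<Rightarrow> 'x) \<Rightarrow> nat \<Rightarrow> nat \<Rightarrow> real" where
  "shift_match_prob M X s t = measure M {\<omega> \<in> space M. \<forall>i\<in>{1 .. int t}. X i \<omega> = X (i + int s) \<omega>}"

end

theory Submission
  imports Defs
begin


locale proc = prob_space M for M :: "'a measure" +
  fixes X :: "int \<Rightarrow> 'a \<Rightarrow> 'x::finite"
  assumes meas: "\<And>i. X i \<in> measurable M (count_space UNIV)"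
begin

abbreviation "d \<equiv> mixing_coeff M X"

lemma gen_pow: "(\<Union>j\<in>J. {X j -` A \<inter> space M | A. True}) \<subseteq> Pow (space M)"
  by auto

lemma gen_sets: "(\<Union>j\<in>J. {X j -` A \<inter> space M | A. True}) \<subseteq> sets M"
  using meas by (auto intro!: measurable_sets)

lemma past_sa: "sigma_algebra (space M) (past_events M X i)"
  unfolding past_events_def by (rule sigma_algebra_sigma_sets[OF gen_pow])

lemma future_sa: "sigma_algebra (space M) (future_events M X i)"
  unfolding future_events_def by (rule sigma_algebra_sigma_sets[OF gen_pow])

lemma past_sets: "past_events M X i \<subseteq> sets M"
  unfolding past_events_def by (rule sets.sigma_sets_subset[OF gen_sets])

lemma future_sets: "future_events M X i \<subseteq> sets M"
  unfolding future_events_def by (rule sets.sigma_sets_subset[OF gen_sets])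

lemma past_mono: assumes "i \<le> j" shows "past_events M X i \<subseteq> past_events M X j"
  unfolding past_events_def
proof (rule sigma_sets_mono', rule subsetI)
  fix S assume "S \<in> (\<Union>k\<in>{..i}. {X k -` A \<inter> space M | A. True})"
  then obtain k A where "k \<le> i" "S = X k -` A \<inter> space M" by auto
  then show "S \<in> (\<Union>k\<in>{..j}. {X k -` A \<inter> space M | A. True})" using assms by (intro UN_I[where a=k]) auto
qed

lemma future_mono: assumes "j \<le> i" shows "future_events M X i \<subseteq> future_events M X j"
  unfolding future_events_def
proof (rule sigma_sets_mono', rule subsetI)
  fix S assume "S \<in> (\<Union>k\<in>{i..}. {X k -` A \<inter> space M | A. True})"
  then obtain k A where "i \<le> k" "S = X k -` A \<inter> space M" by auto
  then show "S \<in> (\<Union>k\<in>{j..}. {X k -` A \<inter> space M | A. True})" using assms by (intro UN_I[where a=k]) auto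
qed

lemma pt_past: "{\<omega> \<in> space M. X q \<omega> = x} \<in> past_events M X q"
proof -
  have "{\<omega> \<in> space M. X q \<omega> = x} = X q -` {x} \<inter> space M" by auto
  then show ?thesis unfolding past_events_def by (auto intro!: sigma_sets.Basic)
qed

lemma pt_future: "{\<omega> \<in> space M. X q \<omega> = x} \<in> future_events M X q"
proof -
  have "{\<omega> \<in> space M. X q \<omega> = x} = X q -` {x} \<inter> space M" by auto
  then show ?thesis unfolding future_events_def by (auto intro!: sigma_sets.Basic)
qed

lemma pair_eq: "{\<omega> \<in> space M. X j \<omega> = X k \<omega>} = (\<Union>x\<in>UNIV. {\<omega> \<in> space M. X j \<omega> = x} \<inter> {\<omega> \<in> space M. X k \<omega> = x})"
  by auto

lemma pair_past: assumes "j \<le> i" "k \<le> i" shows "{\<omega> \<in> space M. X j \<omega> = X k \<omega>} \<in> past_events M X i"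
proof -
  interpret S: sigma_algebra "space M" "past_events M X i" by (rule past_sa)
  show ?thesis unfolding pair_eq
    using subsetD[OF past_mono[OF assms(1)] pt_past] subsetD[OF past_mono[OF assms(2)] pt_past] by (intro S.finite_UN S.Int) auto
qed

lemma pair_future: assumes "i \<le> j" "i \<le> k" shows "{\<omega> \<in> space M. X j \<omega> = X k \<omega>} \<in> future_events M X i"
proof -
  interpret S: sigma_algebra "space M" "future_events M X i" by (rule future_sa)
  show ?thesis unfolding pair_eq
    using subsetD[OF future_mono[OF assms(1)] pt_future] subsetD[OF future_mono[OF assms(2)] pt_future] by (intro S.finite_UN S.Int) auto
qed

lemma mix_bdd: "bdd_above {\<bar>measure M (F \<inter> E) / measure M E - measure M F\<bar> | i E F.
       E \<in> past_events M X i \<and> F \<in> future_events M X (i + int s) \<and> measure M E > 0}"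
proof (rule bdd_aboveI[where M=1], clarify)
  fix i E F assume h: "E \<in> past_events M X i" "F \<in> future_events M X (i + int s)" "measure M E > 0"
  have "E \<in> sets M" "F \<in> sets M" using h past_sets future_sets by auto
  then have "measure M (F \<inter> E) \<le> measure M E" by (intro finite_measure_mono) auto
  then have r1: "measure M (F \<inter> E) / measure M E \<le> 1" using h(3) by auto
  have r0: "0 \<le> measure M (F \<inter> E) / measure M E" by simp
  have f1: "measure M F \<le> 1" by simp
  have f0: "0 \<le> measure M F" by simp
  show "\<bar>measure M (F \<inter> E) / measure M E - measure M F\<bar> \<le> 1"
    unfolding abs_le_iff using r1 r0 f1 f0 by linarith
qed

lemma mix_ineq:
  assumes "E \<in> past_events M X i" "F \<in> future_events M X (i + int s)"
  shows "measure M (F \<inter> E) \<le> measure M E * (measure M F + d s)"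
    "measure M E * (measure M F - d s) \<le> measure M (F \<inter> E)"
proof -
  have EF: "E \<in> sets M" "F \<in> sets M" using assms past_sets future_sets by auto
  have "measure M (F \<inter> E) \<le> measure M E * (measure M F + d s) \<and> measure M E * (measure M F - d s) \<le> measure M (F \<inter> E)"
  proof (cases "measure M E > 0")
    case True
    have "\<bar>measure M (F \<inter> E) / measure M E - measure M F\<bar> \<le> d s"
      unfolding mixing_coeff_def using assms True by (intro cSup_upper[OF _ mix_bdd]) blast
    note hd = this
    have eq: "measure M (F \<inter> E) - measure M E * measure M F = measure M E * (measure M (F \<inter> E) / measure M E - measure M F)"
      using True by (simp add: field_simps)
    have "\<bar>measure M (F \<inter> E) - measure M E * measure M F\<bar> = measure M E * \<bar>measure M (F \<inter> E) / measure M E - measure M F\<bar>"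
      unfolding eq abs_mult using True by simp
    also have "\<dots> \<le> measure M E * d s" using hd True by (intro mult_left_mono) auto
    finally have h: "measure M (F \<inter> E) - measure M E * measure M F \<le> measure M E * d s"
        "measure M E * measure M F - measure M (F \<inter> E) \<le> measure M E * d s"
      unfolding abs_le_iff by auto
    show ?thesis unfolding distrib_left right_diff_distrib using h by linarith
  next
    case False
    then have "measure M E = 0" using measure_nonneg[of M E] by linarith
    moreover have "measure M (F \<inter> E) \<le> measure M E" using EF by (intro finite_measure_mono) auto
    ultimately show ?thesis using measure_nonneg[of M "F \<inter> E"] by auto
  qed
  then show "measure M (F \<inter> E) \<le> measure M E * (measure M F + d s)"
    "measure M E * (measure M F - d s) \<le> measure M (F \<inter> E)" by auto
qed

lemma d_nonneg: "0 \<le> d s"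
proof -
  have a: "space M \<in> past_events M X 0" unfolding past_events_def by (rule sigma_sets_top)
  have b: "space M \<in> future_events M X (0 + int s)" unfolding future_events_def by (rule sigma_sets_top)
  have "\<bar>measure M (space M \<inter> space M) / measure M (space M) - measure M (space M)\<bar> \<in> {\<bar>measure M (F \<inter> E) / measure M E - measure M F\<bar> | i E F.
       E \<in> past_events M X i \<and> F \<in> future_events M X (i + int s) \<and> measure M E > 0}"
    apply (rule CollectI) apply (rule exI[where x=0]) apply (rule exI[where x="space M"]) apply (rule exI[where x="space M"])
    using a b by (simp add: prob_space)
  then have "\<bar>measure M (space M \<inter> space M) / measure M (space M) - measure M (space M)\<bar> \<le> d s"
    unfolding mixing_coeff_def by (rule cSup_upper[OF _ mix_bdd])
  then show ?thesis by (meson abs_ge_zero order_trans)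
qed

end



lemma stat_shift:
  fixes X :: "int \<Rightarrow> 'a \<Rightarrow> 'x"
  assumes "stationary_process M X" "\<And>i. X i \<in> measurable M (count_space UNIV)"
    and "S \<in> sets (PiM UNIV (\<lambda>_. count_space UNIV))"
  shows "measure M {\<omega> \<in> space M. (\<lambda>i. X (i+k) \<omega>) \<in> S} = measure M {\<omega> \<in> space M. (\<lambda>i. X i \<omega>) \<in> S}"
proof -
  have m1: "(\<lambda>\<omega> i. X (i+k) \<omega>) \<in> measurable M (PiM UNIV (\<lambda>_. count_space UNIV))"
    by (rule measurable_PiM_single') (auto simp: assms(2))
  have m2: "(\<lambda>\<omega> i. X i \<omega>) \<in> measurable M (PiM UNIV (\<lambda>_. count_space UNIV))"
    by (rule measurable_PiM_single') (auto simp: assms(2))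
  have "measure (distr M (PiM UNIV (\<lambda>_. count_space UNIV)) (\<lambda>\<omega> i. X (i + k) \<omega>)) S
      = measure (distr M (PiM UNIV (\<lambda>_. count_space UNIV)) (\<lambda>\<omega> i. X i \<omega>)) S"
    using assms(1) unfolding stationary_process_def by metis
  then show ?thesis using measure_distr[OF m1 assms(3)] measure_distr[OF m2 assms(3)]
    by (simp add: vimage_def Int_def conj_commute)
qed

lemma sets_pair: "{f \<in> space (PiM UNIV (\<lambda>_. count_space (UNIV::'x::finite set))). f a = f b} \<in> sets (PiM UNIV (\<lambda>_. count_space UNIV))"
  by measurable

lemma sets_pt: "{f \<in> space (PiM UNIV (\<lambda>_. count_space (UNIV::'x::finite set))). f a = x} \<in> sets (PiM UNIV (\<lambda>_. count_space UNIV))"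
  by measurable

context proc begin

lemma inter_sets: "finite K \<Longrightarrow> (\<And>k. k \<in> K \<Longrightarrow> C k \<in> sets M) \<Longrightarrow> space M \<inter> (\<Inter>k\<in>K. C k) \<in> sets M"
  by (cases "K = {}") (auto intro!: sets.Int sets.finite_INT)

lemma chain:
  assumes "finite K" "\<And>k. k \<in> K \<Longrightarrow> C k \<in> past_events M X (k + L)"
    "\<And>k. k \<in> K \<Longrightarrow> C k \<in> future_events M X k"
    "\<And>k k'. k \<in> K \<Longrightarrow> k' \<in> K \<Longrightarrow> k < k' \<Longrightarrow> k + L + int g \<le> k'"
  shows "measure M (space M \<inter> (\<Inter>k\<in>K. C k)) \<le> (\<Prod>k\<in>K. measure M (C k) + d g)"
  using assms
proof (induction K rule: finite_linorder_max_induct)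
  case empty
  then show ?case by (simp add: prob_space)
next
  case (insert b A)
  let ?E = "space M \<inter> (\<Inter>k\<in>A. C k)"
  have IH: "measure M ?E \<le> (\<Prod>k\<in>A. measure M (C k) + d g)"
    using insert.prems by (intro insert.IH) auto
  interpret S: sigma_algebra "space M" "past_events M X (b - int g)" by (rule past_sa)
  have Ck: "C a \<in> past_events M X (b - int g)" if "a \<in> A" for a
  proof -
    have "a + L + int g \<le> b" using insert.prems(3)[of a b] insert.hyps(2) that by auto
    then show ?thesis using past_mono[of "a + L" "b - int g"] insert.prems(1)[of a] that by auto
  qed
  have E: "?E \<in> past_events M X (b - int g)"
  proof (cases "A = {}")
    case True then show ?thesis using S.top by simp
  next
    case False then show ?thesis using Ck insert.hyps(1) by (intro S.Int S.top S.finite_INT) auto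
  qed
  have F: "C b \<in> future_events M X (b - int g + int g)" using insert.prems(2)[of b] by simp
  have Cbs: "C b \<in> sets M" using F future_sets by auto
  then have "space M \<inter> (\<Inter>k\<in>insert b A. C k) = C b \<inter> ?E" using sets.sets_into_space by auto
  then have "measure M (space M \<inter> (\<Inter>k\<in>insert b A. C k)) = measure M (C b \<inter> ?E)" by simp
  also have "\<dots> \<le> measure M ?E * (measure M (C b) + d g)" by (rule mix_ineq(1)[OF E F])
  also have "\<dots> \<le> (\<Prod>k\<in>A. measure M (C k) + d g) * (measure M (C b) + d g)"
    using IH d_nonneg[of g] by (intro mult_right_mono) auto
  also have "\<dots> = (\<Prod>k\<in>insert b A. measure M (C k) + d g)"
    using insert.hyps by (subgoal_tac "b \<notin> A") (auto simp: mult.commute)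
  finally show ?case .
qed

end

locale sproc = proc +
  assumes stat: "stationary_process M X"
begin

definition "pr x = measure M {\<omega> \<in> space M. X 1 \<omega> = x}"

lemma pt_stat: "measure M {\<omega> \<in> space M. X q \<omega> = x} = pr x"
proof -
  have "measure M {\<omega> \<in> space M. (\<lambda>i. X (i+(q-1)) \<omega>) \<in> {f \<in> space (PiM UNIV (\<lambda>_. count_space UNIV)). f 1 = x}} = measure M {\<omega> \<in> space M. (\<lambda>i. X i \<omega>) \<in> {f \<in> space (PiM UNIV (\<lambda>_. count_space UNIV)). f 1 = x}}"
    by (rule stat_shift[OF stat meas sets_pt])
  then show ?thesis by (simp add: pr_def space_PiM)
qed

lemma pair_stat: "measure M {\<omega> \<in> space M. X j \<omega> = X (j + s) \<omega>} = measure M {\<omega> \<in> space M. X 1 \<omega> = X (1 + s) \<omega>}"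
proof -
  have "measure M {\<omega> \<in> space M. (\<lambda>i. X (i+(j-1)) \<omega>) \<in> {f \<in> space (PiM UNIV (\<lambda>_. count_space UNIV)). f 1 = f (1 + s)}} = measure M {\<omega> \<in> space M. (\<lambda>i. X i \<omega>) \<in> {f \<in> space (PiM UNIV (\<lambda>_. count_space UNIV)). f 1 = f (1 + s)}}"
    by (rule stat_shift[OF stat meas sets_pair])
  then show ?thesis by (simp add: space_PiM add.commute add.left_commute)
qed

lemma rec_bdd: "bdd_above {measure M {\<omega> \<in> space M. X 1 \<omega> = X (1 + int s) \<omega>} | s::nat. s \<ge> 1}"
  by (rule bdd_aboveI[where M=1]) auto

lemma pair_le_R: assumes "s \<ge> 1"
  shows "measure M {\<omega> \<in> space M. X j \<omega> = X (j + int s) \<omega>} \<le> recurrence_coeff M X"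
  unfolding pair_stat[of j] recurrence_coeff_def using assms by (intro cSup_upper[OF _ rec_bdd]) blast

lemma R_nonneg: "0 \<le> recurrence_coeff M X"
  using pair_le_R[of 1 0] measure_nonneg order_trans by blast

lemma pr_lt1: assumes "recurrence_coeff M X < 1" shows "pr x < 1"
proof (rule ccontr)
  assume "\<not> pr x < 1"
  moreover have "pr x \<le> 1" unfolding pr_def by simp
  ultimately have p1: "pr x = 1" by linarith
  then have A1: "measure M {\<omega> \<in> space M. X 1 \<omega> = x} = 1" unfolding pr_def .
  have B1: "measure M {\<omega> \<in> space M. X 2 \<omega> = x} = 1" using p1 pt_stat[of 2 x] by simp
  let ?A = "{\<omega> \<in> space M. X 1 \<omega> = x}" and ?B = "{\<omega> \<in> space M. X 2 \<omega> = x}"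
  have sA: "?A \<in> sets M" and sB: "?B \<in> sets M" using pt_past past_sets by auto
  have "measure M (?A \<union> ?B) = measure M ?A + measure M (?B - ?A)" by (rule finite_measure_Union'[OF sA sB])
  moreover have "measure M (?A \<union> ?B) \<le> 1" by simp
  ultimately have "measure M (?B - ?A) = 0" using A1 measure_nonneg[of M "?B - ?A"] by linarith
  moreover have "measure M (?B - ?A) = measure M ?B - measure M (?B \<inter> ?A)" by (rule finite_measure_Diff'[OF sB sA])
  ultimately have m1: "measure M (?B \<inter> ?A) = 1" using B1 by linarith
  have sub: "?B \<inter> ?A \<subseteq> {\<omega> \<in> space M. X 1 \<omega> = X (1 + int 1) \<omega>}" by auto
  have ss: "{\<omega> \<in> space M. X 1 \<omega> = X (1 + int 1) \<omega>} \<in> sets M" using pair_past[of 1 2 2] past_sets by auto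
  have "1 \<le> measure M {\<omega> \<in> space M. X 1 \<omega> = X (1 + int 1) \<omega>}"
    using finite_measure_mono[OF sub ss] m1 by linarith
  then show False using pair_le_R[of 1 1] assms by simp
qed

end


context sproc begin

lemma pt_sets: "{\<omega> \<in> space M. X q \<omega> = x} \<in> sets M"
  using pt_past past_sets by auto

lemma pair_sets: "{\<omega> \<in> space M. X j \<omega> = X k \<omega>} \<in> sets M"
  using pair_past[of j "max j k" k] past_sets by auto

lemma caseA:
  assumes s1: "1 \<le> s" and mt: "m * (s + g) \<le> t"
  shows "shift_match_prob M X s t \<le> (recurrence_coeff M X + d g) ^ m"
proof -
  define key where "key k = 1 + int k * int (s + g)" for k :: nat
  define K where "K = key ` {..<m}"
  define C where "C j = {\<omega> \<in> space M. X j \<omega> = X (j + int s) \<omega>}" for j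
  have pos: "0 < int (s + g)" using s1 by simp
  have inj: "inj_on key {..<m}"
    by (rule inj_onI) (use pos in \<open>auto simp: key_def\<close>)
  have cK: "card K = m" unfolding K_def using card_image[OF inj] by simp
  have finK: "finite K" unfolding K_def by simp
  have keyt: "1 \<le> key a \<and> key a \<le> int t" if "a < m" for a
  proof -
    have "(a + 1) * (s + g) \<le> m * (s + g)" using that by (intro mult_right_mono) auto
    then have "a * (s + g) + 1 \<le> t" using mt s1 by (simp add: algebra_simps)
    then have "int a * int (s + g) + 1 \<le> int t" by (metis of_nat_le_iff of_nat_add of_nat_mult of_nat_1)
    then show ?thesis unfolding key_def using pos by auto
  qed
  have sub: "{\<omega> \<in> space M. \<forall>i\<in>{1..int t}. X i \<omega> = X (i + int s) \<omega>} \<subseteq> space M \<inter> (\<Inter>k\<in>K. C k)"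
    using keyt unfolding K_def C_def by auto
  have Cs: "C k \<in> sets M" for k unfolding C_def by (rule pair_sets)
  have "shift_match_prob M X s t \<le> measure M (space M \<inter> (\<Inter>k\<in>K. C k))"
    unfolding shift_match_prob_def by (rule finite_measure_mono[OF sub inter_sets[OF finK Cs]])
  also have "\<dots> \<le> (\<Prod>k\<in>K. measure M (C k) + d g)"
  proof (rule chain[where L="int s"])
    show "finite K" by fact
    show "C k \<in> past_events M X (k + int s)" for k unfolding C_def by (rule pair_past) auto
    show "C k \<in> future_events M X k" for k unfolding C_def by (rule pair_future) auto
    show "k + int s + int g \<le> k'" if kk: "k \<in> K" "k' \<in> K" "k < k'" for k k'
    proof -
      obtain a a' where a: "a < m" "k = key a" "a' < m" "k' = key a'" using kk(1,2) unfolding K_def by blast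
      have "a < a'"
      proof (rule ccontr)
        assume "\<not> a < a'"
        then have "int a' * int (s + g) \<le> int a * int (s + g)" using pos by (intro mult_right_mono) auto
        then show False using kk(3) a unfolding key_def by auto
      qed
      then have "(int a + 1) * int (s + g) \<le> int a' * int (s + g)" using pos by (intro mult_right_mono) auto
      then show ?thesis using a unfolding key_def by (simp add: algebra_simps)
    qed
  qed
  also have "\<dots> \<le> (\<Prod>k\<in>K. recurrence_coeff M X + d g)"
    by (rule prod_mono) (use d_nonneg[of g] pair_le_R[OF s1] in \<open>auto simp: C_def\<close>)
  also have "\<dots> = (recurrence_coeff M X + d g) ^ m" using cK by simp
  finally show ?thesis .
qed

lemma caseB:
  assumes finJ: "finite J" and Jt: "J \<subseteq> {1..int t}" and g1: "g \<ge> 1"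
    and sep1: "\<And>p p'. p \<in> J \<Longrightarrow> p' \<in> J \<Longrightarrow> p \<noteq> p' \<Longrightarrow> int g \<le> \<bar>p - p'\<bar>"
    and sep2: "\<And>p p'. p \<in> J \<Longrightarrow> p' \<in> J \<Longrightarrow> int g \<le> \<bar>p + int s - p'\<bar>"
  shows "shift_match_prob M X s t \<le> ((\<Sum>x\<in>UNIV. pr x + d g) * (Max (range pr) + d g)) ^ card J"
proof -
  define sh where "sh p = p + int s" for p
  define Q where "Q = J \<union> sh ` J"
  define v where "v w q = (if q \<in> J then w q else w (q - int s))" for w :: "int \<Rightarrow> 'b" and q
  define Ev where "Ev w = space M \<inter> (\<Inter>q\<in>Q. {\<omega> \<in> space M. X q \<omega> = v w q})" for w
  have disj: "J \<inter> sh ` J = {}"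
  proof (rule ccontr)
    assume "J \<inter> sh ` J \<noteq> {}"
    then obtain p where p: "p \<in> J" "p + int s \<in> J" unfolding sh_def by auto
    then show False using sep2[OF p(1) p(2)] g1 by simp
  qed
  have injsh: "inj_on sh J" unfolding sh_def by (rule inj_onI) simp
  have finQ: "finite Q" unfolding Q_def using finJ by simp
  have sepQ: "q + int g \<le> q'" if q: "q \<in> Q" "q' \<in> Q" "q < q'" for q q'
  proof -
    consider (a) "q \<in> J" "q' \<in> J" | (b) p where "q \<in> J" "p \<in> J" "q' = p + int s"
      | (c) p where "p \<in> J" "q = p + int s" "q' \<in> J" | (e) p p' where "p \<in> J" "q = p + int s" "p' \<in> J" "q' = p' + int s"
      using q(1,2) unfolding Q_def sh_def by blast
    then show ?thesis
    proof cases
      case a then show ?thesis using sep1[of q q'] q(3) by auto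
    next
      case (b p) then show ?thesis using sep2[of p q] q(3) by auto
    next
      case (c p) then show ?thesis using sep2[of p q'] q(3) by auto
    next
      case (e p p') then show ?thesis using sep1[of p p'] q(3) by auto
    qed
  qed
  have Evs: "Ev w \<in> sets M" for w unfolding Ev_def by (rule inter_sets[OF finQ pt_sets])
  have finP: "finite (PiE J (\<lambda>_. (UNIV :: 'b set)))" using finJ by (simp add: finite_PiE)
  have sub: "{\<omega> \<in> space M. \<forall>i\<in>{1..int t}. X i \<omega> = X (i + int s) \<omega>} \<subseteq> (\<Union>w\<in>PiE J (\<lambda>_. UNIV). Ev w)"
  proof
    fix \<omega> assume om: "\<omega> \<in> {\<omega> \<in> space M. \<forall>i\<in>{1..int t}. X i \<omega> = X (i + int s) \<omega>}"
    let ?w = "restrict (\<lambda>p. X p \<omega>) J"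
    have "?w \<in> PiE J (\<lambda>_. UNIV)" by simp
    moreover have "\<omega> \<in> Ev ?w"
      unfolding Ev_def
    proof (intro IntI InterI)
      show "\<omega> \<in> space M" using om by simp
      fix S assume "S \<in> (\<lambda>q. {\<omega> \<in> space M. X q \<omega> = v ?w q}) ` Q"
      then obtain q where S: "S = {\<omega> \<in> space M. X q \<omega> = v ?w q}" "q \<in> Q" by blast
      show "\<omega> \<in> S"
      proof (cases "q \<in> J")
        case True then show ?thesis using S om by (simp add: v_def)
      next
        case False
        then obtain p where p: "p \<in> J" "q = p + int s" using S(2) unfolding Q_def sh_def by auto
        then have "X p \<omega> = X (p + int s) \<omega>" using om Jt by auto
        then show ?thesis using S om p False by (simp add: v_def)
      qed
    qed
    ultimately show "\<omega> \<in> (\<Union>w\<in>PiE J (\<lambda>_. UNIV). Ev w)" by blast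
  qed
  have "shift_match_prob M X s t \<le> measure M (\<Union>w\<in>PiE J (\<lambda>_. UNIV). Ev w)"
    unfolding shift_match_prob_def
    by (rule finite_measure_mono[OF sub]) (use finP Evs in \<open>auto intro!: sets.finite_UN\<close>)
  also have "\<dots> \<le> (\<Sum>w\<in>PiE J (\<lambda>_. UNIV). measure M (Ev w))"
    by (rule finite_measure_subadditive_finite[OF finP]) (use Evs in auto)
  also have "\<dots> \<le> (\<Sum>w\<in>PiE J (\<lambda>_. UNIV). (\<Prod>p\<in>J. pr (w p) + d g) * (Max (range pr) + d g) ^ card J)"
  proof (rule sum_mono)
    fix w :: "int \<Rightarrow> 'b" assume "w \<in> PiE J (\<lambda>_. UNIV)"
    have "measure M (Ev w) \<le> (\<Prod>q\<in>Q. measure M {\<omega> \<in> space M. X q \<omega> = v w q} + d g)"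
      unfolding Ev_def
      by (rule chain[where L=0, OF finQ]) (auto intro: pt_past pt_future sepQ)
    also have "\<dots> = (\<Prod>q\<in>Q. pr (v w q) + d g)" by (simp add: pt_stat)
    also have "\<dots> = (\<Prod>q\<in>J. pr (v w q) + d g) * (\<Prod>q\<in>sh ` J. pr (v w q) + d g)"
      unfolding Q_def by (rule prod.union_disjoint) (use finJ disj in auto)
    also have "(\<Prod>q\<in>J. pr (v w q) + d g) = (\<Prod>p\<in>J. pr (w p) + d g)"
      by (rule prod.cong) (auto simp: v_def)
    also have "(\<Prod>q\<in>sh ` J. pr (v w q) + d g) = (\<Prod>p\<in>J. pr (v w (sh p)) + d g)"
      by (rule prod.reindex[OF injsh, unfolded comp_def])
    also have "\<dots> = (\<Prod>p\<in>J. pr (w p) + d g)"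
    proof (rule prod.cong)
      fix p assume p: "p \<in> J"
      then have "sh p \<notin> J" using disj by auto
      then show "pr (v w (sh p)) + d g = pr (w p) + d g" by (simp add: v_def sh_def)
    qed simp
    finally have e1: "measure M (Ev w) \<le> (\<Prod>p\<in>J. pr (w p) + d g) * (\<Prod>p\<in>J. pr (w p) + d g)" .
    have "(\<Prod>p\<in>J. pr (w p) + d g) \<le> (\<Prod>p\<in>J. Max (range pr) + d g)"
      by (rule prod_mono) (auto intro!: Max_ge simp: d_nonneg pr_def)
    also have "\<dots> = (Max (range pr) + d g) ^ card J" by simp
    finally have e2: "(\<Prod>p\<in>J. pr (w p) + d g) \<le> (Max (range pr) + d g) ^ card J" .
    have e3: "0 \<le> (\<Prod>p\<in>J. pr (w p) + d g)" by (simp add: prod_nonneg d_nonneg pr_def)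
    show "measure M (Ev w) \<le> (\<Prod>p\<in>J. pr (w p) + d g) * (Max (range pr) + d g) ^ card J"
      using e1 mult_left_mono[OF e2 e3] by linarith
  qed
  also have "\<dots> = (\<Sum>w\<in>PiE J (\<lambda>_. UNIV). (\<Prod>p\<in>J. pr (w p) + d g)) * (Max (range pr) + d g) ^ card J"
    by (simp add: sum_distrib_right)
  also have "(\<Sum>w\<in>PiE J (\<lambda>_. UNIV). (\<Prod>p\<in>J. pr (w p) + d g)) = (\<Prod>p\<in>J. \<Sum>x\<in>UNIV. pr x + d g)"
    by (rule prod_sum_PiE[symmetric]) (use finJ in auto)
  also have "\<dots> = (\<Sum>x\<in>UNIV. pr x + d g) ^ card J" by simp
  finally show ?thesis by (simp add: power_mult_distrib)
qed

end



lemma pow_bound: fixes b q :: real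
  assumes "0 \<le> b" "b \<le> q" "q \<le> 1" "n \<le> m" shows "b ^ m \<le> q ^ n"
proof -
  have "b ^ m \<le> q ^ m" using assms by (intro power_mono) auto
  also have "\<dots> \<le> q ^ n" using assms by (intro power_decreasing) auto
  finally show ?thesis .
qed

context sproc begin

lemma qA_nonneg: "0 \<le> recurrence_coeff M X + d g"
  using R_nonneg d_nonneg[of g] by simp

lemma qB_nonneg: "0 \<le> (\<Sum>x\<in>UNIV. pr x + d g) * (Max (range pr) + d g)"
proof -
  have "0 \<le> pr x" for x by (simp add: pr_def)
  moreover have "pr x \<le> Max (range pr)" for x by (rule Max_ge) auto
  ultimately have "0 \<le> Max (range pr)" by (meson order_trans)
  then show ?thesis using d_nonneg[of g] \<open>\<And>x. 0 \<le> pr x\<close> by (intro mult_nonneg_nonneg sum_nonneg) auto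
qed

lemma caseB2:
  assumes k1: "1 \<le> k" and kt: "k ^ 3 \<le> t" and s: "2 * k \<le> s" "s < k ^ 2"
    and q: "(\<Sum>x\<in>UNIV. pr x + d k) * (Max (range pr) + d k) \<le> q0" "q0 \<le> 1"
  shows "shift_match_prob M X s t \<le> q0 ^ (k div 4)"
proof -
  define I where "I = t div (2 * s)"
  define f where "f i = 1 + 2 * int i * int s" for i :: nat
  define J where "J = f ` {..<I}"
  have sp: "0 < int s" using s k1 by simp
  have inj: "inj_on f {..<I}" by (rule inj_onI) (use sp in \<open>auto simp: f_def\<close>)
  have cJ: "card J = I" unfolding J_def using card_image[OF inj] by simp
  have "I * (2 * s) \<le> t" unfolding I_def by (rule div_times_less_eq_dividend)
  have Jt: "J \<subseteq> {1..int t}"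
  proof
    fix p assume "p \<in> J"
    then obtain i where i: "i < I" "p = f i" unfolding J_def by auto
    have "(i + 1) * (2 * s) \<le> I * (2 * s)" using i by (intro mult_right_mono) auto
    then have "2 * i * s + 1 \<le> t" using \<open>I * (2 * s) \<le> t\<close> sp by (simp add: algebra_simps)
    then have "2 * int i * int s + 1 \<le> int t" by (metis of_nat_le_iff of_nat_add of_nat_mult of_nat_1 of_nat_numeral)
    then show "p \<in> {1..int t}" using i sp unfolding f_def by auto
  qed
  have sep1: "int k \<le> \<bar>p - p'\<bar>" if pp: "p \<in> J" "p' \<in> J" "p \<noteq> p'" for p p'
  proof -
    obtain i i' where i: "p = f i" "p' = f i'" using pp(1,2) unfolding J_def by blast
    have "i \<noteq> i'" using i pp(3) by auto
    then have "1 \<le> \<bar>int i - int i'\<bar>" by auto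
    have "p - p' = int s * (2 * (int i - int i'))" unfolding i f_def by (simp add: algebra_simps)
    then have "\<bar>p - p'\<bar> = int s * (2 * \<bar>int i - int i'\<bar>)" using sp by (simp only: abs_mult)
    moreover have "int s * 1 \<le> int s * (2 * \<bar>int i - int i'\<bar>)" using \<open>1 \<le> \<bar>int i - int i'\<bar>\<close> sp
      by (intro mult_left_mono) auto
    ultimately show ?thesis using s by simp
  qed
  have sep2: "int k \<le> \<bar>p + int s - p'\<bar>" if pp: "p \<in> J" "p' \<in> J" for p p'
  proof -
    obtain i i' where i: "p = f i" "p' = f i'" using pp(1,2) unfolding J_def by blast
    have o: "1 \<le> \<bar>2 * (int i - int i') + 1\<bar>" by arith
    have "p + int s - p' = int s * (2 * (int i - int i') + 1)" unfolding i f_def by (simp add: algebra_simps)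
    then have "\<bar>p + int s - p'\<bar> = int s * \<bar>2 * (int i - int i') + 1\<bar>" using sp by (simp add: abs_mult)
    moreover have "int s * 1 \<le> int s * \<bar>2 * (int i - int i') + 1\<bar>" using o sp by (intro mult_left_mono) auto
    ultimately show ?thesis using s by simp
  qed
  have finJ: "finite J" unfolding J_def by simp
  have h1: "shift_match_prob M X s t \<le> ((\<Sum>x\<in>UNIV. pr x + d k) * (Max (range pr) + d k)) ^ card J"
    by (rule caseB[OF finJ Jt k1 sep1 sep2])
  have "k div 4 \<le> I"
  proof -
    have "k ^ 3 div (2 * k ^ 2) \<le> t div (2 * k ^ 2)" using kt by (rule div_le_mono)
    also have "t div (2 * k ^ 2) \<le> t div (2 * s)" using s k1 by (intro div_le_mono2) auto
    finally have "k ^ 3 div (2 * k ^ 2) \<le> I" unfolding I_def .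
    moreover have "k ^ 3 div (2 * k ^ 2) = k div 2"
    proof -
      have "k ^ 3 = k * k ^ 2" by (simp add: power3_eq_cube power2_eq_square)
      then show ?thesis using k1 by (simp add: mult.commute div_mult_mult2)
    qed
    ultimately show ?thesis by simp
  qed
  then have "((\<Sum>x\<in>UNIV. pr x + d k) * (Max (range pr) + d k)) ^ card J \<le> q0 ^ (k div 4)"
    using cJ q qB_nonneg by (intro pow_bound) auto
  with h1 show ?thesis by linarith
qed

lemma caseB1:
  assumes k1: "1 \<le> k" and kt: "k ^ 3 \<le> t" and s: "k ^ 2 \<le> s"
    and q: "(\<Sum>x\<in>UNIV. pr x + d k) * (Max (range pr) + d k) \<le> q0" "q0 \<le> 1"
  shows "shift_match_prob M X s t \<le> q0 ^ (k div 4)"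
proof -
  define I where "I = min t s div (2 * k)"
  define f where "f i = 1 + int i * int k" for i :: nat
  define J where "J = f ` {..<I}"
  have kp: "0 < int k" using k1 by simp
  have inj: "inj_on f {..<I}" by (rule inj_onI) (use kp in \<open>auto simp: f_def\<close>)
  have cJ: "card J = I" unfolding J_def using card_image[OF inj] by simp
  have kI: "I * (2 * k) \<le> min t s" unfolding I_def by (rule div_times_less_eq_dividend)
  then have kI': "2 * (int k * int I) \<le> int s" "2 * (int k * int I) \<le> int t"
    by (metis min.bounded_iff mult.commute mult.left_commute of_nat_le_iff of_nat_mult of_nat_numeral)+
  have Jt: "J \<subseteq> {1..int t}"
  proof
    fix p assume "p \<in> J"
    then obtain i where i: "i < I" "p = f i" unfolding J_def by auto
    have "int k * (int i + 1) \<le> int k * int I" using i kp by (intro mult_left_mono) auto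
    then have "int i * int k + 1 \<le> int t" using kI' kp by (simp add: algebra_simps)
    then show "p \<in> {1..int t}" using i kp unfolding f_def by auto
  qed
  have sep1: "int k \<le> \<bar>p - p'\<bar>" if pp: "p \<in> J" "p' \<in> J" "p \<noteq> p'" for p p'
  proof -
    obtain i i' where i: "p = f i" "p' = f i'" using pp(1,2) unfolding J_def by blast
    have "i \<noteq> i'" using i pp(3) by auto
    then have o: "1 \<le> \<bar>int i - int i'\<bar>" by auto
    have "p - p' = int k * (int i - int i')" unfolding i f_def by (simp add: algebra_simps)
    then have "\<bar>p - p'\<bar> = int k * \<bar>int i - int i'\<bar>" using kp by (simp add: abs_mult)
    moreover have "int k * 1 \<le> int k * \<bar>int i - int i'\<bar>" using o kp by (intro mult_left_mono) auto
    ultimately show ?thesis by simp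
  qed
  have sep2: "int k \<le> \<bar>p + int s - p'\<bar>" if pp: "p \<in> J" "p' \<in> J" for p p'
  proof -
    obtain i i' where i: "p = f i" "p' = f i'" "i' < I" using pp(1,2) unfolding J_def by blast
    have a: "int k * int i' + int k \<le> int k * int I"
    proof -
      have "int k * (int i' + 1) \<le> int k * int I" using i(3) kp by (intro mult_left_mono) auto
      then show ?thesis by (simp add: algebra_simps)
    qed
    have c: "0 \<le> int k * int i" by simp
    have "p + int s - p' = int s + int k * int i - int k * int i'" unfolding i f_def by (simp add: algebra_simps)
    then have "int k \<le> p + int s - p'" using a c kI'(1) by linarith
    then show ?thesis by linarith
  qed
  have finJ: "finite J" unfolding J_def by simp
  have h1: "shift_match_prob M X s t \<le> ((\<Sum>x\<in>UNIV. pr x + d k) * (Max (range pr) + d k)) ^ card J"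
    by (rule caseB[OF finJ Jt k1 sep1 sep2])
  have "k div 4 \<le> I"
  proof -
    have "k ^ 2 \<le> k ^ 3" using k1 by (intro power_increasing) auto
    then have "k ^ 2 \<le> min t s" using kt s by simp
    then have "k ^ 2 div (2 * k) \<le> I" unfolding I_def by (rule div_le_mono)
    moreover have "k ^ 2 div (2 * k) = k div 2"
    proof -
      have "k ^ 2 = k * k" by (simp add: power2_eq_square)
      then show ?thesis using k1 by (simp add: mult.commute div_mult_mult2)
    qed
    ultimately show ?thesis by simp
  qed
  then have "((\<Sum>x\<in>UNIV. pr x + d k) * (Max (range pr) + d k)) ^ card J \<le> q0 ^ (k div 4)"
    using cJ q qB_nonneg by (intro pow_bound) auto
  with h1 show ?thesis by linarith
qed

lemma caseA2:
  assumes k1: "1 \<le> k" and kt: "k ^ 3 \<le> t" and s: "1 \<le> s" "s < 2 * k"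
    and q: "recurrence_coeff M X + d k \<le> q0" "q0 \<le> 1"
  shows "shift_match_prob M X s t \<le> q0 ^ (k div 4)"
proof -
  define m where "m = t div (3 * k)"
  have "m * (s + k) \<le> m * (3 * k)" using s by (intro mult_left_mono) auto
  also have "\<dots> \<le> t" unfolding m_def by (rule div_times_less_eq_dividend)
  finally have h1: "shift_match_prob M X s t \<le> (recurrence_coeff M X + d k) ^ m"
    by (rule caseA[OF s(1)])
  have "k div 4 \<le> m"
  proof -
    have "k ^ 3 div (3 * k) \<le> m" unfolding m_def using kt by (rule div_le_mono)
    moreover have "k ^ 3 div (3 * k) = k ^ 2 div 3"
    proof -
      have "k ^ 3 = k * k ^ 2" by (simp add: power3_eq_cube power2_eq_square)
      then show ?thesis using k1 by (simp add: mult.commute div_mult_mult2)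
    qed
    moreover have "k div 4 \<le> k div 3" by (rule div_le_mono2) auto
    moreover have "k div 3 \<le> k ^ 2 div 3" using k1 by (intro div_le_mono) (simp add: power2_eq_square)
    ultimately show ?thesis by linarith
  qed
  then have "(recurrence_coeff M X + d k) ^ m \<le> q0 ^ (k div 4)"
    using q qA_nonneg by (intro pow_bound) auto
  with h1 show ?thesis by linarith
qed

lemma combined:
  assumes k1: "1 \<le> k" and kt: "k ^ 3 \<le> t" and s: "1 \<le> s"
    and qa: "recurrence_coeff M X + d k \<le> q0"
    and qb: "(\<Sum>x\<in>UNIV. pr x + d k) * (Max (range pr) + d k) \<le> q0" and q1: "q0 \<le> 1"
  shows "shift_match_prob M X s t \<le> q0 ^ (k div 4)"
proof -
  consider "s < 2 * k" | "2 * k \<le> s" "s < k ^ 2" | "k ^ 2 \<le> s" by linarith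
  then show ?thesis
  proof cases
    case 1 then show ?thesis using caseA2[OF k1 kt s _ qa q1] by simp
  next
    case 2 then show ?thesis using caseB2[OF k1 kt _ _ qb q1] by simp
  next
    case 3 then show ?thesis using caseB1[OF k1 kt _ qb q1] by simp
  qed
qed

end



lemma poly_geom: fixes q :: real assumes q: "0 < q" "q < 1"
  shows "(\<lambda>m. real (m+1) ^ 3 * q ^ m) \<longlonglongrightarrow> 0"
proof -
  define r where "r = root 3 q"
  have r3: "r ^ 3 = q" unfolding r_def using q by simp
  have r1: "norm r < 1" unfolding r_def using q by (simp add: real_root_gt_zero less_imp_le)
  have "(\<lambda>n. real n * r ^ n) \<longlonglongrightarrow> 0" using powser_times_n_limit_0[OF r1] by simp
  then have "(\<lambda>n. (real n * r ^ n) ^ 3) \<longlonglongrightarrow> 0 ^ 3" by (intro tendsto_power)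
  then have h3: "(\<lambda>n. (real n * r ^ n) ^ 3) \<longlonglongrightarrow> 0" by simp
  have "(\<lambda>m. (real (Suc m) * r ^ (Suc m)) ^ 3) \<longlonglongrightarrow> 0" using LIMSEQ_Suc[OF h3] by simp
  then have "(\<lambda>m. (real (Suc m) * r ^ (Suc m)) ^ 3 / q) \<longlonglongrightarrow> 0 / q" by (intro tendsto_divide) (use q in auto)
  moreover have "(real (Suc m) * r ^ (Suc m)) ^ 3 / q = real (m+1) ^ 3 * q ^ m" for m
  proof -
    have "(real (Suc m) * r ^ (Suc m)) ^ 3 = real (m+1) ^ 3 * (r ^ 3) ^ (Suc m)"
      by (simp add: power_mult_distrib power_mult[symmetric] mult.commute)
    then show ?thesis using q r3 by simp
  qed
  ultimately show ?thesis by simp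
qed

lemma poly_geom_ev: fixes q e :: real assumes q: "0 < q" "q < 1" and e: "0 < e"
  shows "\<exists>K. \<forall>k\<ge>K. real (k+1) ^ 3 * q ^ (k div 4) \<le> e"
proof -
  have "\<forall>\<^sub>F m in sequentially. real (m+1) ^ 3 * q ^ m < e / 64"
    using poly_geom[OF q] e by (intro order_tendstoD(2)) auto
  then obtain M1 where M1: "\<And>m. m \<ge> M1 \<Longrightarrow> real (m+1) ^ 3 * q ^ m < e / 64"
    unfolding eventually_sequentially by blast
  show ?thesis
  proof (intro exI allI impI)
    fix k assume k: "4 * M1 \<le> k"
    define m where "m = k div 4"
    have mM: "M1 \<le> m" using k unfolding m_def by simp
    have "k + 1 \<le> 4 * (m + 1)" unfolding m_def by simp
    then have "real (k+1) \<le> 4 * real (m+1)" by linarith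
    then have "real (k+1) ^ 3 \<le> (4 * real (m+1)) ^ 3" by (intro power_mono) auto
    then have "real (k+1) ^ 3 * q ^ m \<le> (4 * real (m+1)) ^ 3 * q ^ m" using q by (intro mult_right_mono) auto
    also have "\<dots> = 64 * (real (m+1) ^ 3 * q ^ m)" by (simp add: power3_eq_cube algebra_simps)
    also have "\<dots> \<le> e" using M1[OF mM] by simp
    finally show "real (k+1) ^ 3 * q ^ (k div 4) \<le> e" unfolding m_def .
  qed
qed

context sproc begin

lemma sum_pr: "(\<Sum>x\<in>UNIV. pr x) = 1"
proof -
  have "(\<Sum>x\<in>UNIV. pr x) = measure M (\<Union>x\<in>UNIV. {\<omega> \<in> space M. X 1 \<omega> = x})"
    unfolding pr_def
    by (rule finite_measure_finite_Union[symmetric]) (auto simp: pt_sets disjoint_family_on_def)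
  also have "(\<Union>x\<in>UNIV. {\<omega> \<in> space M. X 1 \<omega> = x}) = space M" by auto
  finally show ?thesis by (simp add: prob_space)
qed

lemma eventual:
  assumes R1: "recurrence_coeff M X < 1" and dlim: "d \<longlonglongrightarrow> 0" and e: "0 < e"
  shows "\<exists>T\<ge>1. \<forall>t\<ge>T. \<forall>s\<ge>1. shift_match_prob M X s t \<le> e / real t"
proof -
  define pm where "pm = Max (range pr)"
  have pm1: "pm < 1" unfolding pm_def using pr_lt1[OF R1] by (subst Max_less_iff) auto
  have pm0: "0 \<le> pm" unfolding pm_def by (rule order_trans[OF _ Max_ge[of _ "pr undefined"]]) (auto simp: pr_def)
  define C where "C = real CARD('b)"
  have C1: "1 \<le> C" unfolding C_def by simp
  define mm where "mm = max (recurrence_coeff M X) pm"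
  have mu: "mm < 1" "0 \<le> mm" "recurrence_coeff M X \<le> mm" "pm \<le> mm" unfolding mm_def using pm1 R1 pm0 by auto
  define dd where "dd = (1 - mm) / (2 * (2 * C + 1))"
  have dl: "0 < dd" unfolding dd_def using mu C1 by auto
  have dl2: "dd * (2 * C + 1) = (1 - mm) / 2" unfolding dd_def using C1 by (simp add: field_simps)
  have dl1: "dd \<le> 1"
  proof -
    have "0 < 2 * (2 * C + 1)" using C1 by simp
    moreover have "1 - mm \<le> 1 * (2 * (2 * C + 1))" using C1 mu by simp
    ultimately show ?thesis unfolding dd_def by (simp only: divide_le_eq) simp
  qed
  have dle: "dd \<le> (1 - mm) / 2"
  proof -
    have "dd * 1 \<le> dd * (2 * C + 1)" using dl C1 by (intro mult_left_mono) auto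
    then show ?thesis by (simp only: mult_1_right dl2)
  qed
  define q0 where "q0 = (1 + mm) / 2"
  have q0: "0 < q0" "q0 < 1" unfolding q0_def using mu by auto
  have "\<forall>\<^sub>F k in sequentially. d k < dd" using dlim dl by (intro order_tendstoD(2)) auto
  then obtain K0 where K0: "\<And>k. k \<ge> K0 \<Longrightarrow> d k < dd" unfolding eventually_sequentially by blast
  have qa: "recurrence_coeff M X + d k \<le> q0" if "k \<ge> K0" for k
  proof -
    have a1: "recurrence_coeff M X + d k \<le> mm + dd" using K0[OF that] mu(3) by (intro add_mono) auto
    have a2: "mm + dd \<le> (1 + mm) / 2" using dle by (simp add: field_simps)
    show ?thesis unfolding q0_def using a1 a2 by (rule order_trans)
  qed
  have qb: "(\<Sum>x\<in>UNIV. pr x + d k) * (Max (range pr) + d k) \<le> q0" if "k \<ge> K0" for k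
  proof -
    have dk: "0 \<le> d k" "d k \<le> dd" using K0[OF that] d_nonneg[of k] by auto
    have "(\<Sum>x\<in>UNIV. pr x + d k) = 1 + C * d k" by (simp add: sum.distrib sum_pr C_def)
    then have "(\<Sum>x\<in>UNIV. pr x + d k) * (Max (range pr) + d k) = (1 + C * d k) * (pm + d k)" by (simp add: pm_def)
    also have "\<dots> \<le> (1 + C * dd) * (mm + dd)"
      using dk C1 mu pm0 by (intro mult_mono add_mono mult_left_mono) auto
    also have "\<dots> = mm + dd + C * dd * mm + C * dd * dd" by (simp add: algebra_simps)
    also have "\<dots> \<le> mm + dd + C * dd * 1 + C * dd * 1"
      using mu dl dl1 C1 by (intro add_mono mult_left_mono) auto
    also have "\<dots> = mm + dd * (2 * C + 1)" by (simp add: algebra_simps)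
    also have "\<dots> = q0" unfolding dl2 q0_def by (simp add: field_simps)
    finally show ?thesis .
  qed
  obtain K1 where K1: "\<And>k. k \<ge> K1 \<Longrightarrow> real (k+1) ^ 3 * q0 ^ (k div 4) \<le> e"
    using poly_geom_ev[OF q0 e] by blast
  define K where "K = max 1 (max K0 K1)"
  show ?thesis
  proof (intro exI[of _ "K ^ 3"] conjI allI impI)
    show "1 \<le> K ^ 3" unfolding K_def by simp
    fix t s :: nat assume t: "K ^ 3 \<le> t" and s: "1 \<le> s"
    define k where "k = Max {k. k ^ 3 \<le> t}"
    have fin: "finite {k. k ^ 3 \<le> t}"
    proof (rule finite_subset[of _ "{..t}"])
      show "{k. k ^ 3 \<le> t} \<subseteq> {..t}"
      proof
        fix k assume "k \<in> {k. k ^ 3 \<le> t}"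
        moreover have "k \<le> k ^ 3" by (cases k) (auto simp: power3_eq_cube)
        ultimately show "k \<in> {..t}" by auto
      qed
    qed auto
    have Kk: "K \<le> k" unfolding k_def using t fin by (intro Max_ge) auto
    have kt: "k ^ 3 \<le> t" unfolding k_def using fin Max_in[OF fin] t by auto
    have tk: "t < (k + 1) ^ 3"
    proof (rule ccontr)
      assume "\<not> t < (k + 1) ^ 3"
      then have "k + 1 \<le> k" unfolding k_def using fin by (intro Max_ge) auto
      then show False by simp
    qed
    have k1: "1 \<le> k" "K0 \<le> k" "K1 \<le> k" using Kk unfolding K_def by auto
    have "shift_match_prob M X s t \<le> q0 ^ (k div 4)"
      by (rule combined[OF k1(1) kt s qa[OF k1(2)] qb[OF k1(2)]]) (use q0 in auto)
    also have "\<dots> \<le> e / real (k + 1) ^ 3"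
      using K1[OF k1(3)] by (simp add: field_simps)
    also have "\<dots> \<le> e / real t"
    proof (rule divide_left_mono)
      have "real t < real ((k + 1) ^ 3)" using tk by linarith
      then show "real t \<le> real (k + 1) ^ 3" by simp
      show "0 \<le> e" using e by simp
      have "1 \<le> t" using t \<open>1 \<le> K ^ 3\<close> by linarith
      then show "0 < real (k + 1) ^ 3 * real t" by simp
    qed
    finally show "shift_match_prob M X s t \<le> e / real t" .
  qed
qed

end



theorem mainTheorem10:
  fixes M :: "'a measure" and X :: "int \<Rightarrow> 'a \<Rightarrow> 'x::finite"
    and H \<beta> \<eta> :: real
  assumes "prob_space M"
    and "\<And>i. X i \<in> measurable M (count_space UNIV)"
    and "stationary_process M X"
    and "mixing_coeff M X \<longlonglongrightarrow> 0"
    and "summable (mixing_coeff M X)"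
    and "(\<lambda>t. block_entropy M X t / (2 * real t + 1)) \<longlonglongrightarrow> H"
    and "0 < H"
    and "recurrence_coeff M X < 1"
    and "\<beta> > 0" and "\<eta> > 0"
  shows "\<forall>\<epsilon>>0. \<forall>\<^sub>F n in sequentially.
           \<forall>s t. 1 \<le> s \<and> real s \<le> \<beta> * log (real CARD('x)) (real n)
               \<and> (1 + \<eta>) / H * log (real CARD('x)) (real n) \<le> real t
               \<and> real t \<le> \<beta> * log (real CARD('x)) (real n)
             \<longrightarrow> shift_match_prob M X s t \<le> \<epsilon> / log (real CARD('x)) (real n)"
proof -
  have sp: "sproc M X"
    unfolding sproc_def sproc_axioms_def proc_def proc_axioms_def using assms(1-3) by auto
  interpret sproc M X by (rule sp)
  show ?thesis
  proof (intro allI impI)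
    fix \<epsilon> :: real assume ep: "0 < \<epsilon>"
    show "\<forall>\<^sub>F n in sequentially.
           \<forall>s t. 1 \<le> s \<and> real s \<le> \<beta> * log (real CARD('x)) (real n)
               \<and> (1 + \<eta>) / H * log (real CARD('x)) (real n) \<le> real t
               \<and> real t \<le> \<beta> * log (real CARD('x)) (real n)
             \<longrightarrow> shift_match_prob M X s t \<le> \<epsilon> / log (real CARD('x)) (real n)"
    proof (cases "CARD('x) = 1")
      case True
      then have "log (real CARD('x)) y = 0" for y by (simp add: log_def)
      then show ?thesis by simp
    next
      case False
      have "0 < CARD('x)" by simp
      then have "2 \<le> CARD('x)" using False by linarith
      then have b1: "1 < real CARD('x)" by simp
      define b where "b = real CARD('x)"
      have b: "1 < b" using b1 unfolding b_def .
      define c where "c = (1 + \<eta>) / H"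
      have c: "0 < c" unfolding c_def using assms(7,10) by simp
      obtain T where T: "T \<ge> 1" "\<And>t s. t \<ge> T \<Longrightarrow> s \<ge> 1 \<Longrightarrow> shift_match_prob M X s t \<le> (\<epsilon> * c) / real t"
        using eventual[OF assms(8) assms(4), of "\<epsilon> * c"] ep c by auto
      have "\<forall>\<^sub>F n in sequentially. b powr (real T / c + 1) \<le> real n"
        using filterlim_real_sequentially unfolding filterlim_at_top by blast
      then show ?thesis
      proof (rule eventually_mono)
        fix n :: nat assume n: "b powr (real T / c + 1) \<le> real n"
        have npos: "0 < real n" using n b by (smt (verit) powr_gt_zero)
        have L: "real T / c + 1 \<le> log b (real n)"
        proof -
          have "log b (b powr (real T / c + 1)) \<le> log b (real n)" using n b npos by (subst log_le_cancel_iff) auto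
          moreover have "log b (b powr (real T / c + 1)) = real T / c + 1" using b by (intro log_powr_cancel) auto
          ultimately show ?thesis by simp
        qed
        have Lpos: "0 < log b (real n)" using L c by (smt (verit) divide_nonneg_pos of_nat_0_le_iff)
        show "\<forall>s t. 1 \<le> s \<and> real s \<le> \<beta> * log (real CARD('x)) (real n)
               \<and> (1 + \<eta>) / H * log (real CARD('x)) (real n) \<le> real t
               \<and> real t \<le> \<beta> * log (real CARD('x)) (real n)
             \<longrightarrow> shift_match_prob M X s t \<le> \<epsilon> / log (real CARD('x)) (real n)"
        proof (intro allI impI)
          fix s t :: nat
          assume st: "1 \<le> s \<and> real s \<le> \<beta> * log (real CARD('x)) (real n)
               \<and> (1 + \<eta>) / H * log (real CARD('x)) (real n) \<le> real t
               \<and> real t \<le> \<beta> * log (real CARD('x)) (real n)"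
          have tL: "c * log b (real n) \<le> real t" using st unfolding c_def b_def by simp
          have ineq: "c * (real T / c + 1) \<le> c * log b (real n)" using L c by (intro mult_left_mono) auto
          have eq: "c * (real T / c + 1) = real T + c" using c by (simp add: field_simps)
          have "real T + c \<le> c * log b (real n)" using ineq unfolding eq .
          then have "real T \<le> real t" using tL c by linarith
          then have tT: "T \<le> t" by simp
          have "shift_match_prob M X s t \<le> (\<epsilon> * c) / real t" using T(2)[OF tT] st by simp
          also have "\<dots> \<le> (\<epsilon> * c) / (c * log b (real n))"
          proof (rule divide_left_mono)
            have cL: "0 < c * log b (real n)" using c Lpos by simp
            have tp: "0 < real t" using tL cL by linarith
            show "0 < real t * (c * log b (real n))" using cL tp by simp
          qed (use tL ep c in auto)
          also have "\<dots> = \<epsilon> / log (real CARD('x)) (real n)" using c unfolding b_def by simp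
          finally show "shift_match_prob M X s t \<le> \<epsilon> / log (real CARD('x)) (real n)" .
        qed
      qed
    qed
  qed
qed


end
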